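(* Let $\omega\ge1$ and $n>2$ be integers, $r=2^\omega$, $R=2^{\omega n}$, and let $p$ be a positive odd integer. Let $T\ge0$ be an integer and $T_i=\lfloor T/r^{i-1}\rfloor\bmod r$ for $i\ge1$. For $1\le i\le n-2$ let $M_i$ be an integer with $M_i\equiv r^{-n+i+1}\pmod p$, let $H_i=T_iM_i$, and let $T^{(n-2)}=\lfloor T/r^{n-2}\rfloor+\sum_{i=1}^{n-2}H_i$. Then $$TR^{-1}\equiv T^{(n-2)}r^{-2}\pmod p.$$
   Context: Negative powers of $r$ and $R$ denote powers of their inverses modulo $p$ (which exist since $p$ is odd). $TR^{-1}\bmod p$ is the Montgomery reduction $\mathrm{REDC}(T)$. *)

theory Defs
  imports "HOL-Number_Theory.Number_Theory"
begin

text \<open>Inverse of a modulo p (exists when a and p are coprime); negative powers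
  r^(-k) mod p are read as minv p (r^k).\<close>
definition minv :: "int \<Rightarrow> int \<Rightarrow> int" where
  "minv p a = (SOME x. [a * x = 1] (mod p))"

end

theory Submission
  imports Defs
begin

lemma minv_inv:
  assumes "coprime a p"
  shows "[a * minv p a = 1] (mod p)"
proof -
  obtain x where "[a * x = 1] (mod p)"
    using cong_solve_coprime_int[OF assms] by blast
  then show ?thesis unfolding minv_def by (rule someI)
qed

lemma inv_unique:
  assumes "[a * x = 1] (mod (p::int))" "[a * y = 1] (mod p)"
  shows "[x = y] (mod p)"
proof -
  have 1: "[x * (a * y) = x * 1] (mod p)" by (rule cong_mult[OF cong_refl assms(2)])
  have 2: "[y * (a * x) = y * 1] (mod p)" by (rule cong_mult[OF cong_refl assms(1)])
  have 3: "x * (a * y) = y * (a * x)" by (simp add: mult_ac)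
  have "[x = x * (a * y)] (mod p)" using cong_sym[OF 1] by simp
  also have "x * (a * y) = y * (a * x)" by (rule 3)
  also have "[y * (a * x) = y] (mod p)" using 2 by simp
  finally show ?thesis .
qed

lemma digits:
  fixes T r :: int
  assumes "r > 0"
  shows "T = T div r ^ m * r ^ m + (\<Sum>i = 1..m. (T div r ^ (i - 1) mod r) * r ^ (i - 1))"
proof (induction m)
  case 0
  then show ?case by simp
next
  case (Suc m)
  have d: "T div r ^ Suc m = T div r ^ m div r"
    by (metis power_Suc2 zdiv_zmult2_eq zero_le_power less_imp_le assms)
  have e: "T div r ^ m = T div r ^ m div r * r + T div r ^ m mod r" by simp
  have "T div r ^ m * r ^ m = T div r ^ Suc m * r ^ Suc m + (T div r ^ m mod r) * r ^ m"
  proof -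
    have "T div r ^ m * r ^ m = (T div r ^ m div r * r + T div r ^ m mod r) * r ^ m"
      by (simp only: div_mult_mod_eq)
    also have "\<dots> = T div r ^ Suc m * r ^ Suc m + (T div r ^ m mod r) * r ^ m"
      by (subst d) (simp only: power_Suc2 distrib_right distrib_left mult_ac)
    finally show ?thesis .
  qed
  then show ?case using Suc by simp
qed

theorem lemma3:
  fixes \<omega> n :: nat and p T :: int and M :: "nat \<Rightarrow> int"
  assumes "\<omega> \<ge> 1" and "n > 2"
    and "p > 0" and "odd p"
    and "T \<ge> 0"
    and "\<forall>i. 1 \<le> i \<and> i \<le> n - 2 \<longrightarrow> [M i = minv p ((2 ^ \<omega>) ^ (n - i - 1))] (mod p)"
  shows "[T * minv p (2 ^ (\<omega> * n))
          = (T div (2 ^ \<omega>) ^ (n - 2)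
             + (\<Sum>i = 1..n - 2. ((T div (2 ^ \<omega>) ^ (i - 1)) mod 2 ^ \<omega>) * M i))
            * minv p ((2 ^ \<omega>) ^ 2)] (mod p)"
proof -
  define r :: int where "r = 2 ^ \<omega>"
  define m where "m = n - 2"
  define u where "u = minv p r"
  define Q where "Q = T div r ^ m"
  define D where "D = (\<lambda>i. T div r ^ (i - 1) mod r)"
  have n: "n = m + 2" using assms(2) m_def by simp
  have cop2: "coprime (2::int) p" using assms(4) by simp
  have copk: "coprime (r ^ k) p" for k unfolding r_def
    using cop2 by (simp add: coprime_power_left_iff)
  have A: "[r * u = 1] (mod p)" unfolding u_def using copk[of 1] minv_inv by simp
  have rk: "[r ^ k * u ^ k = 1] (mod p)" for k
    using cong_pow[OF A, of k] by (simp add: power_mult_distrib)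
  have B: "[minv p (r ^ k) = u ^ k] (mod p)" for k
    using inv_unique[OF minv_inv[OF copk[of k]] rk[of k]] .
  have C: "[M i = u ^ (n - i - 1)] (mod p)" if "i \<in> {1..m}" for i
    using assms(6) that B[of "n - i - 1"] m_def r_def by (auto intro: cong_trans)
  have rpos: "r > 0" unfolding r_def by simp
  have "T * u ^ n = (Q * r ^ m + (\<Sum>i = 1..m. D i * r ^ (i - 1))) * u ^ n"
    using digits[OF rpos, of T m] unfolding Q_def D_def by simp
  also have "\<dots> = Q * (r ^ m * u ^ m) * u ^ 2
        + (\<Sum>i = 1..m. D i * (r ^ (i - 1) * u ^ (i - 1)) * u ^ (n - i - 1) * u ^ 2)"
  proof -
    have "D i * r ^ (i - 1) * u ^ n = D i * (r ^ (i - 1) * u ^ (i - 1)) * u ^ (n - i - 1) * u ^ 2"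
      if "i \<in> {1..m}" for i
    proof -
      have "u ^ n = u ^ (i - 1) * u ^ (n - i - 1) * u ^ 2"
        using that n by (simp add: power_add[symmetric])
      then show ?thesis by (simp add: algebra_simps)
    qed
    then have s: "(\<Sum>i = 1..m. D i * r ^ (i - 1) * u ^ n) =
       (\<Sum>i = 1..m. D i * (r ^ (i - 1) * u ^ (i - 1)) * u ^ (n - i - 1) * u ^ 2)"
      by (rule sum.cong[OF refl])
    have q: "Q * r ^ m * u ^ n = Q * (r ^ m * u ^ m) * u ^ 2" by (simp only: n power_add mult_ac)
    have "(Q * r ^ m + (\<Sum>i = 1..m. D i * r ^ (i - 1))) * u ^ n
       = Q * r ^ m * u ^ n + (\<Sum>i = 1..m. D i * r ^ (i - 1) * u ^ n)"
      by (simp add: distrib_right sum_distrib_right)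
    then show ?thesis using s q by simp
  qed
  also have "[\<dots> = Q * 1 * u ^ 2 + (\<Sum>i = 1..m. D i * 1 * u ^ (n - i - 1) * u ^ 2)] (mod p)"
    by (intro cong_add cong_mult cong_refl rk cong_sum)
  also have "Q * 1 * u ^ 2 + (\<Sum>i = 1..m. D i * 1 * u ^ (n - i - 1) * u ^ 2)
      = (Q + (\<Sum>i = 1..m. D i * u ^ (n - i - 1))) * u ^ 2"
    by (simp add: distrib_right sum_distrib_right)
  also have "[\<dots> = (Q + (\<Sum>i = 1..m. D i * M i)) * minv p (r ^ 2)] (mod p)"
    by (intro cong_add cong_mult cong_refl cong_sum cong_sym[OF B] cong_sym[OF C]) 
  finally have F: "[T * u ^ n = (Q + (\<Sum>i = 1..m. D i * M i)) * minv p (r ^ 2)] (mod p)" .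
  have G: "[T * minv p (r ^ n) = T * u ^ n] (mod p)" by (intro cong_mult cong_refl B)
  have "(2::int) ^ (\<omega> * n) = r ^ n" unfolding r_def by (simp add: power_mult)
  then show ?thesis using cong_trans[OF G F] unfolding Q_def D_def m_def r_def by simp
qed

end
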